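(* Let $G_2=BS(1,2)=\langle a,b\mid bab^{-1}=a^2\rangle$ and let $\Gamma_2$ be its Cayley graph with respect to $\{a,b\}$. If $\sigma$ is a geodesic in $\Gamma_2$, then $\sigma$ does not contain three distinct $b$-edges $e_1,e_2,e_3$ with $h(e_1)=h(e_2)=h(e_3)$.
   Context: $\Gamma_2$ has vertex set $G_2$ and edges $\{g,gs\}$ for $s\in\{a^{\pm1},b^{\pm1}\}$; an edge $\{g,gb\}$ is a $b$-edge and $\{g,ga\}$ an $a$-edge. The height $h(\omega)\in\mathbb{Z}$ of $\omega\in G_2$ is the integer with $\omega=a^kb^{h(\omega)}$ in the abelianization of $G_2$ for some $k$ (i.e., the exponent sum of $b$ in any word representing $\omega$). For a $b$-edge $e=\{v,w\}$, $h(e)=\max\{h(v),h(w)\}$. *)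

theory Defs
  imports Main
begin

datatype gen = A | Ainv | B | Binv

fun ginv :: "gen \<Rightarrow> gen" where
  "ginv A = Ainv" | "ginv Ainv = A" | "ginv B = Binv" | "ginv Binv = B"

inductive weq :: "gen list \<Rightarrow> gen list \<Rightarrow> bool" where
  weq_refl: "weq u u"
| weq_sym: "weq u v \<Longrightarrow> weq v u"
| weq_trans: "weq u v \<Longrightarrow> weq v w \<Longrightarrow> weq u w"
| weq_cancel: "weq (u @ [x, ginv x] @ v) (u @ v)"
| weq_rel: "weq (u @ [B, A, Binv] @ v) (u @ [A, A] @ v)"

lemma weq_equivp: "equivp weq"
  by (rule equivpI; auto intro: reflpI sympI transpI weq.intros)

quotient_type G2 = "gen list" / weq
  by (rule weq_equivp)

lemma weq_snoc: "weq u v \<Longrightarrow> weq (u @ [s]) (v @ [s])"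
proof (induction rule: weq.induct)
  case (weq_cancel u x v) then show ?case using weq.weq_cancel[of u x "v @ [s]"] by simp
next
  case (weq_rel u v) then show ?case using weq.weq_rel[of u "v @ [s]"] by simp
qed (auto intro: weq.intros)

lift_definition rmul :: "G2 \<Rightarrow> gen \<Rightarrow> G2" is "\<lambda>w s. w @ [s]"
  by (rule weq_snoc)

fun bexp :: "gen \<Rightarrow> int" where
  "bexp A = 0" | "bexp Ainv = 0" | "bexp B = 1" | "bexp Binv = -1"

lemma bexp_ginv: "bexp (ginv x) = - bexp x"
  by (cases x) auto

lemma weq_bsum: "weq u v \<Longrightarrow> sum_list (map bexp u) = sum_list (map bexp v)"
  by (induction rule: weq.induct) (auto simp: bexp_ginv)

lift_definition height :: "G2 \<Rightarrow> int" is "\<lambda>w. sum_list (map bexp w)"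
  by (rule weq_bsum)

definition cayley_edges :: "G2 set set" where
  "cayley_edges = {{g, rmul g s} | g s. True}"

definition b_edge :: "G2 set \<Rightarrow> bool" where
  "b_edge e \<longleftrightarrow> (\<exists>g. e = {g, rmul g B})"

definition edge_height :: "G2 set \<Rightarrow> int" where
  "edge_height e = Max (height ` e)"

definition is_path :: "G2 list \<Rightarrow> bool" where
  "is_path vs \<longleftrightarrow> vs \<noteq> [] \<and>
     (\<forall>i. Suc i < length vs \<longrightarrow> {vs ! i, vs ! Suc i} \<in> cayley_edges)"

definition path_edges :: "G2 list \<Rightarrow> G2 set set" where
  "path_edges vs = {{vs ! i, vs ! Suc i} | i. Suc i < length vs}"

definition geodesic :: "G2 list \<Rightarrow> bool" where
  "geodesic vs \<longleftrightarrow> is_path vs \<and>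
     (\<forall>ws. is_path ws \<and> hd ws = hd vs \<and> last ws = last vs \<longrightarrow> length vs \<le> length ws)"

end

theory Submission
  imports Defs
begin

lemma weq_appL: "weq u v \<Longrightarrow> weq (p @ u) (p @ v)"
proof (induction rule: weq.induct)
  case (weq_cancel u x v) then show ?case using weq.weq_cancel[of "p @ u" x v] by simp
next
  case (weq_rel u v) then show ?case using weq.weq_rel[of "p @ u" v] by simp
qed (auto intro: weq.intros)

lemma weq_appR: "weq u v \<Longrightarrow> weq (u @ q) (v @ q)"
proof (induction rule: weq.induct)
  case (weq_cancel u x v) then show ?case using weq.weq_cancel[of u x "v @ q"] by simp
next
  case (weq_rel u v) then show ?case using weq.weq_rel[of u "v @ q"] by simp
qed (auto intro: weq.intros)

lift_definition gmul :: "G2 \<Rightarrow> G2 \<Rightarrow> G2" (infixl "\<cdot>" 70) is "append"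
  by (meson weq_appL weq_appR weq.weq_trans)

lift_definition gone :: G2 is "[]" .

lift_definition gen :: "gen \<Rightarrow> G2" is "\<lambda>s. [s]" .

lemma gmul_assoc: "(x \<cdot> y) \<cdot> z = x \<cdot> (y \<cdot> z)"
  by transfer (simp add: weq.weq_refl)

lemma gone_left[simp]: "gone \<cdot> x = x"
  by transfer (simp add: weq.weq_refl)

lemma gone_right[simp]: "x \<cdot> gone = x"
  by transfer (simp add: weq.weq_refl)

lemma gen_inv[simp]: "gen s \<cdot> gen (ginv s) = gone"
  by transfer (use weq.weq_cancel[of "[]" _ "[]"] in simp)

lemma ginv_ginv[simp]: "ginv (ginv s) = s"
  by (cases s) auto

lemma gen_inv'[simp]: "gen (ginv s) \<cdot> gen s = gone"
  using gen_inv[of "ginv s"] by simp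

lemma gen_rel: "gen B \<cdot> gen A \<cdot> gen Binv = gen A \<cdot> gen A"
  by transfer (use weq.weq_rel[of "[]" "[]"] in simp)

lemma rmul_gmul: "rmul g s = g \<cdot> gen s"
  by transfer (simp add: weq.weq_refl)

lemma height_gmul[simp]: "height (x \<cdot> y) = height x + height y"
  by transfer simp

lemma height_gen[simp]: "height (gen s) = bexp s"
  by transfer simp

lemma height_gone[simp]: "height gone = 0"
  by transfer simp

declare gmul_assoc[simp]

lemma gen_inv_assoc[simp]: "gen s \<cdot> (gen (ginv s) \<cdot> z) = z"
  by (metis gen_inv gmul_assoc gone_left)

lemma gen_inv_assoc'[simp]: "gen (ginv s) \<cdot> (gen s \<cdot> z) = z"
  by (metis gen_inv' gmul_assoc gone_left)

lemma gen_inv_simps[simp]: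
  "gen A \<cdot> gen Ainv = gone" "gen Ainv \<cdot> gen A = gone"
  "gen B \<cdot> gen Binv = gone" "gen Binv \<cdot> gen B = gone"
  "gen A \<cdot> (gen Ainv \<cdot> z) = z" "gen Ainv \<cdot> (gen A \<cdot> z) = z"
  "gen B \<cdot> (gen Binv \<cdot> z) = z" "gen Binv \<cdot> (gen B \<cdot> z) = z"
  using gen_inv[of A] gen_inv[of Ainv] gen_inv[of B] gen_inv[of Binv]
    gen_inv_assoc[of A] gen_inv_assoc[of Ainv] gen_inv_assoc[of B] gen_inv_assoc[of Binv]
  by simp_all

fun gpow :: "G2 \<Rightarrow> nat \<Rightarrow> G2" where
  "gpow x 0 = gone"
| "gpow x (Suc n) = gpow x n \<cdot> x"

lemma gpow_add: "gpow x (m + n) = gpow x m \<cdot> gpow x n"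
  by (induction n) auto

lemma gpow_Suc': "gpow x (Suc n) = x \<cdot> gpow x n"
proof (induction n)
  case (Suc n)
  then show ?case by (metis gmul_assoc gpow.simps(2))
qed simp

lemma height_gpow[simp]: "height (gpow x n) = int n * height x"
  by (induction n) (auto simp: algebra_simps)

lemma bi_b_pow: "gpow (gen Binv) n \<cdot> gpow (gen B) n = gone"
proof (induction n)
  case (Suc n)
  have "gpow (gen Binv) (Suc n) \<cdot> gpow (gen B) (Suc n)
     = gpow (gen Binv) n \<cdot> (gen Binv \<cdot> (gen B \<cdot> gpow (gen B) n))"
    by (simp only: gpow.simps(2)[of "gen Binv"] gpow_Suc'[of "gen B"] gmul_assoc)
  also have "\<dots> = gone" using Suc by simp
  finally show ?case .
qed simp

lemma b_bi_pow: "gpow (gen B) n \<cdot> gpow (gen Binv) n = gone"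
proof (induction n)
  case (Suc n)
  have "gpow (gen B) (Suc n) \<cdot> gpow (gen Binv) (Suc n)
     = gpow (gen B) n \<cdot> (gen B \<cdot> (gen Binv \<cdot> gpow (gen Binv) n))"
    by (simp only: gpow.simps(2)[of "gen B"] gpow_Suc'[of "gen Binv"] gmul_assoc)
  also have "\<dots> = gone" using Suc by simp
  finally show ?case .
qed simp

definition apow :: "int \<Rightarrow> G2" where
  "apow k = (if k \<ge> 0 then gpow (gen A) (nat k) else gpow (gen Ainv) (nat (-k)))"

lemma height_apow[simp]: "height (apow k) = 0"
  by (simp add: apow_def)

lemma apow_0[simp]: "apow 0 = gone"
  by (simp add: apow_def)

lemma apow_succ: "apow (k + 1) = apow k \<cdot> gen A"
proof (cases "k \<ge> 0")
  case True
  then have "nat (k+1) = Suc (nat k)" by simp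
  then show ?thesis using True by (simp add: apow_def)
next
  case False
  then have n: "nat (-k) = Suc (nat (-(k+1)))" by simp
  show ?thesis
  proof (cases "k + 1 = 0")
    case True
    then have "nat (-k) = Suc 0" by simp
    then show ?thesis using True False by (simp add: apow_def)
  next
    case F2: False
    then show ?thesis using False n by (simp add: apow_def)
  qed
qed

lemma apow_pred: "apow (k - 1) = apow k \<cdot> gen Ainv"
  using apow_succ[of "k - 1"] by simp

lemma apow_add: "apow x \<cdot> apow y = apow (x + y)"
proof (induction y rule: int_induct[where k=0])
  case base then show ?case by simp
next
  case (step1 i)
  then show ?case using apow_succ[of i] apow_succ[of "x + i"]
    by (metis add.assoc gmul_assoc)
next
  case (step2 i)
  then show ?case using apow_pred[of i] apow_pred[of "x + i"]
    by (metis add_diff_eq gmul_assoc)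
qed

lemma apow_comm: "apow x \<cdot> apow y = apow y \<cdot> apow x"
  by (simp add: apow_add add.commute)

lemma apow_2: "apow 2 = gen A \<cdot> gen A"
  using apow_succ[of 1] apow_succ[of 0] by simp

lemma b_a: "gen B \<cdot> gen A = apow 2 \<cdot> gen B"
proof -
  have "gen B \<cdot> gen A = gen B \<cdot> gen A \<cdot> gen Binv \<cdot> gen B" by simp
  also have "\<dots> = apow 2 \<cdot> gen B" by (simp only: gen_rel apow_2)
  finally show ?thesis .
qed

lemma rcancel_A: "x \<cdot> gen A = y \<cdot> gen A \<Longrightarrow> x = y"
proof -
  assume h: "x \<cdot> gen A = y \<cdot> gen A"
  have "x = x \<cdot> gen A \<cdot> gen Ainv" by simp
  also have "\<dots> = y \<cdot> gen A \<cdot> gen Ainv" by (simp only: h)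
  finally show ?thesis by simp
qed

lemma b_apow: "gen B \<cdot> apow k = apow (2 * k) \<cdot> gen B"
proof (induction k rule: int_induct[where k=0])
  case base then show ?case by simp
next
  case (step1 i)
  have e: "apow (2*i) \<cdot> apow 2 = apow (2*(i+1))" by (simp add: apow_add algebra_simps)
  have "gen B \<cdot> apow (i + 1) = gen B \<cdot> apow i \<cdot> gen A" by (simp only: apow_succ gmul_assoc)
  also have "\<dots> = apow (2 * i) \<cdot> gen B \<cdot> gen A" by (simp only: step1)
  also have "\<dots> = apow (2 * i) \<cdot> (apow 2 \<cdot> gen B)" by (simp only: gmul_assoc b_a)
  also have "\<dots> = apow (2 * (i + 1)) \<cdot> gen B" by (simp only: gmul_assoc[symmetric] e)
  finally show ?case .
next
  case (step2 i)
  have e: "apow (2*(i - 1)) \<cdot> apow 2 = apow (2*i)" by (simp add: apow_add algebra_simps)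
  have "gen B \<cdot> apow (i - 1) \<cdot> gen A = gen B \<cdot> apow i"
    using apow_succ[of "i - 1"] by (simp only: gmul_assoc diff_add_cancel)
  also have "\<dots> = apow (2 * (i - 1)) \<cdot> apow 2 \<cdot> gen B"
    by (simp only: step2 e)
  also have "\<dots> = apow (2 * (i - 1)) \<cdot> gen B \<cdot> gen A" by (simp only: gmul_assoc b_a)
  finally show ?case by (rule rcancel_A)
qed

lemma bpow_apow: "gpow (gen B) j \<cdot> apow k = apow (k * 2 ^ j) \<cdot> gpow (gen B) j"
proof (induction j arbitrary: k)
  case 0 then show ?case by simp
next
  case (Suc j)
  have "gpow (gen B) (Suc j) \<cdot> apow k = gpow (gen B) j \<cdot> (gen B \<cdot> apow k)" by simp
  also have "\<dots> = gpow (gen B) j \<cdot> apow (2 * k) \<cdot> gen B" by (simp add: b_apow)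
  also have "\<dots> = apow (k * 2 ^ Suc j) \<cdot> gpow (gen B) (Suc j)"
    using Suc[of "2*k"] by (simp add: algebra_simps)
  finally show ?case .
qed

lemma apow_bi: "apow k \<cdot> gen Binv = gen Binv \<cdot> apow (2 * k)"
proof -
  have "apow k \<cdot> gen Binv = gen Binv \<cdot> (gen B \<cdot> apow k) \<cdot> gen Binv" by simp
  also have "\<dots> = gen Binv \<cdot> apow (2 * k)" by (simp add: b_apow)
  finally show ?thesis .
qed

definition prodw :: "gen list \<Rightarrow> G2" where
  "prodw w = foldl (\<lambda>g s. g \<cdot> gen s) gone w"

lemma prodw_Nil[simp]: "prodw [] = gone"
  by (simp add: prodw_def)

lemma prodw_snoc[simp]: "prodw (w @ [s]) = prodw w \<cdot> gen s"
  by (simp add: prodw_def)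

lemma prodw_append: "prodw (u @ v) = prodw u \<cdot> prodw v"
proof (induction v rule: rev_induct)
  case Nil then show ?case by simp
next
  case (snoc x xs)
  then show ?case by (simp flip: append_assoc)
qed

lemma prodw_single[simp]: "prodw [s] = gen s"
  using prodw_snoc[of "[]" s] by simp

lemma prodw_Cons[simp]: "prodw (x # w) = gen x \<cdot> prodw w"
  using prodw_append[of "[x]" w] by simp

lemma bpow_a: "gpow (gen B) j \<cdot> gen A = apow (2 ^ j) \<cdot> gpow (gen B) j"
  using bpow_apow[of j 1] apow_succ[of 0] by simp

lemma bpow_ai: "gpow (gen B) j \<cdot> gen Ainv = apow (- (2 ^ j)) \<cdot> gpow (gen B) j"
  using bpow_apow[of j "-1"] apow_pred[of 0] by simp

lemma normal_form: "\<exists>m k j. prodw w = gpow (gen Binv) m \<cdot> apow k \<cdot> gpow (gen B) j"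
proof (induction w rule: rev_induct)
  case Nil
  show ?case by (rule exI[of _ 0], rule exI[of _ 0], rule exI[of _ 0]) simp
next
  case (snoc s w)
  then obtain m k j where e: "prodw w = gpow (gen Binv) m \<cdot> apow k \<cdot> gpow (gen B) j" by blast
  show ?case
  proof (cases s)
    case A
    have "prodw (w @ [s]) = gpow (gen Binv) m \<cdot> apow k \<cdot> (gpow (gen B) j \<cdot> gen A)"
      using A e by simp
    also have "\<dots> = gpow (gen Binv) m \<cdot> (apow k \<cdot> apow (2 ^ j)) \<cdot> gpow (gen B) j"
      by (simp only: bpow_a gmul_assoc)
    also have "\<dots> = gpow (gen Binv) m \<cdot> apow (k + 2 ^ j) \<cdot> gpow (gen B) j"
      by (simp only: apow_add)
    finally show ?thesis by blast
  next
    case Ainv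
    have "prodw (w @ [s]) = gpow (gen Binv) m \<cdot> apow k \<cdot> (gpow (gen B) j \<cdot> gen Ainv)"
      using Ainv e by simp
    also have "\<dots> = gpow (gen Binv) m \<cdot> (apow k \<cdot> apow (- (2 ^ j))) \<cdot> gpow (gen B) j"
      by (simp only: bpow_ai gmul_assoc)
    also have "\<dots> = gpow (gen Binv) m \<cdot> apow (k + - (2 ^ j)) \<cdot> gpow (gen B) j"
      by (simp only: apow_add)
    finally show ?thesis by blast
  next
    case B
    have "prodw (w @ [s]) = gpow (gen Binv) m \<cdot> apow k \<cdot> gpow (gen B) (Suc j)"
      using B e by simp
    then show ?thesis by blast
  next
    case Binv
    show ?thesis
    proof (cases j)
      case 0
      have "prodw (w @ [s]) = gpow (gen Binv) m \<cdot> (apow k \<cdot> gen Binv)"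
        using Binv e 0 by simp
      also have "\<dots> = gpow (gen Binv) (Suc m) \<cdot> apow (2 * k) \<cdot> gpow (gen B) 0"
        by (simp add: apow_bi)
      finally show ?thesis by blast
    next
      case (Suc j')
      have "prodw (w @ [s]) = gpow (gen Binv) m \<cdot> apow k \<cdot> gpow (gen B) j'"
        using Binv e Suc by simp
      then show ?thesis by blast
    qed
  qed
qed

lemma height_prodw: "height (prodw w) = sum_list (map bexp w)"
  by (induction w rule: rev_induct) auto

lemma lift_nf: "gpow (gen Binv) m \<cdot> apow k \<cdot> gpow (gen B) m
   = gpow (gen Binv) (m + d) \<cdot> apow (k * 2 ^ d) \<cdot> gpow (gen B) (m + d)"
proof -
  have "gpow (gen Binv) (m + d) \<cdot> apow (k * 2 ^ d) \<cdot> gpow (gen B) (m + d)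
      = gpow (gen Binv) m \<cdot> (gpow (gen Binv) d \<cdot> (apow (k * 2 ^ d) \<cdot> gpow (gen B) d)) \<cdot> gpow (gen B) m"
  proof -
    have "gpow (gen B) (m + d) = gpow (gen B) d \<cdot> gpow (gen B) m"
      by (metis add.commute gpow_add)
    then show ?thesis by (simp only: gpow_add[of "gen Binv" m d] gmul_assoc)
  qed
  also have "\<dots> = gpow (gen Binv) m \<cdot> (gpow (gen Binv) d \<cdot> (gpow (gen B) d \<cdot> apow k)) \<cdot> gpow (gen B) m"
    by (simp only: bpow_apow)
  also have "\<dots> = gpow (gen Binv) m \<cdot> apow k \<cdot> gpow (gen B) m"
    by (simp only: gmul_assoc[symmetric] bi_b_pow gone_left) 
  finally show ?thesis by simp
qed

lemma height0_nf:
  assumes "height g = 0" "g = prodw w"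
  shows "\<exists>m k. g = gpow (gen Binv) m \<cdot> apow k \<cdot> gpow (gen B) m"
proof -
  obtain m k j where e: "g = gpow (gen Binv) m \<cdot> apow k \<cdot> gpow (gen B) j"
    using normal_form assms(2) by blast
  then have "int j - int m = 0" using assms(1) by simp
  then have "j = m" by simp
  then show ?thesis using e by blast
qed

lemma height0_comm:
  assumes "height (prodw u) = 0" "height (prodw v) = 0"
  shows "prodw u \<cdot> prodw v = prodw v \<cdot> prodw u"
proof -
  obtain m k where e1: "prodw u = gpow (gen Binv) m \<cdot> apow k \<cdot> gpow (gen B) m"
    using height0_nf assms(1) by blast
  obtain n l where e2: "prodw v = gpow (gen Binv) n \<cdot> apow l \<cdot> gpow (gen B) n"
    using height0_nf assms(2) by blast
  define M where "M = max m n"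
  obtain x where x: "prodw u = gpow (gen Binv) M \<cdot> apow x \<cdot> gpow (gen B) M"
    using e1 lift_nf[of m k "M - m"] unfolding M_def by (metis le_add_diff_inverse max.cobounded1)
  obtain y where y: "prodw v = gpow (gen Binv) M \<cdot> apow y \<cdot> gpow (gen B) M"
    using e2 lift_nf[of n l "M - n"] unfolding M_def by (metis le_add_diff_inverse max.cobounded2)
  have gen: "gpow (gen Binv) M \<cdot> apow x \<cdot> gpow (gen B) M \<cdot> (gpow (gen Binv) M \<cdot> apow y \<cdot> gpow (gen B) M)
     = gpow (gen Binv) M \<cdot> apow (x + y) \<cdot> gpow (gen B) M" for x y
  proof -
    have "gpow (gen Binv) M \<cdot> apow x \<cdot> gpow (gen B) M \<cdot> (gpow (gen Binv) M \<cdot> apow y \<cdot> gpow (gen B) M)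
      = gpow (gen Binv) M \<cdot> apow x \<cdot> (gpow (gen B) M \<cdot> gpow (gen Binv) M) \<cdot> apow y \<cdot> gpow (gen B) M"
      by (simp only: gmul_assoc)
    also have "\<dots> = gpow (gen Binv) M \<cdot> (apow x \<cdot> apow y) \<cdot> gpow (gen B) M"
      by (simp only: b_bi_pow gone_right gmul_assoc)
    finally show ?thesis by (simp only: apow_add)
  qed
  show ?thesis using gen[of x y] gen[of y x] x y by (simp only: add.commute)
qed

lemma key_swap:
  assumes "height (prodw w1) = 0" "height (prodw w2) = 0"
  shows "gen x \<cdot> prodw w1 \<cdot> gen (ginv x) \<cdot> prodw w2 \<cdot> gen x = prodw w2 \<cdot> gen x \<cdot> prodw w1"
proof -
  let ?u = "[x] @ w1 @ [ginv x]"
  have pu: "prodw ?u = gen x \<cdot> prodw w1 \<cdot> gen (ginv x)"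
    by (simp add: prodw_append)
  have "height (prodw ?u) = 0" using assms(1) by (simp add: pu bexp_ginv)
  then have c: "prodw ?u \<cdot> prodw w2 = prodw w2 \<cdot> prodw ?u"
    using height0_comm assms(2) by blast
  have "gen x \<cdot> prodw w1 \<cdot> gen (ginv x) \<cdot> prodw w2 \<cdot> gen x = prodw ?u \<cdot> prodw w2 \<cdot> gen x"
    by (simp only: pu)
  also have "\<dots> = prodw w2 \<cdot> prodw ?u \<cdot> gen x" by (simp only: c)
  also have "\<dots> = prodw w2 \<cdot> gen x \<cdot> prodw w1" by (simp add: pu)
  finally show ?thesis .
qed

lemma ivt_down:
  fixes f :: "nat \<Rightarrow> int"
  shows "a \<le> b \<Longrightarrow> f a \<ge> h \<Longrightarrow> f b < h \<Longrightarrow> (\<forall>t. a \<le> t \<and> t < b \<longrightarrow> \<bar>f (Suc t) - f t\<bar> \<le> 1)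
    \<Longrightarrow> \<exists>t. a \<le> t \<and> t < b \<and> f t = h \<and> f (Suc t) = h - 1"
proof (induction b)
  case 0 then show ?case by simp
next
  case (Suc b)
  show ?case
  proof (cases "f b \<ge> h")
    case True
    have "a \<le> b" using Suc.prems True by (metis le_SucE not_less)
    then have "\<bar>f (Suc b) - f b\<bar> \<le> 1" using Suc.prems by auto
    then show ?thesis using True Suc.prems \<open>a \<le> b\<close> by (intro exI[of _ b]) auto
  next
    case False
    have "a \<noteq> Suc b" using Suc.prems by auto
    then have "a \<le> b" using Suc.prems by simp
    then show ?thesis using Suc.IH Suc.prems False by fastforce
  qed
qed

lemma ivt_up:
  fixes f :: "nat \<Rightarrow> int"
  assumes "a \<le> b" "f a \<le> h - 1" "f b \<ge> h" "\<forall>t. a \<le> t \<and> t < b \<longrightarrow> \<bar>f (Suc t) - f t\<bar> \<le> 1"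
  shows "\<exists>t. a \<le> t \<and> t < b \<and> f t = h - 1 \<and> f (Suc t) = h"
proof -
  have "\<exists>t. a \<le> t \<and> t < b \<and> - f t = 1 - h \<and> - f (Suc t) = (1 - h) - 1"
    by (rule ivt_down[of a b "1 - h" "\<lambda>t. - f t"]) (use assms in auto)
  then show ?thesis by auto
qed

definition Hc :: "int \<Rightarrow> gen list \<Rightarrow> nat \<Rightarrow> int" where
  "Hc c ss t = c + height (prodw (take t ss))"

definition cross :: "int \<Rightarrow> gen list \<Rightarrow> int \<Rightarrow> nat \<Rightarrow> bool" where
  "cross c ss h i \<longleftrightarrow> i < length ss \<and>
     ((ss ! i = B \<and> Hc c ss i = h - 1) \<or> (ss ! i = Binv \<and> Hc c ss i = h))"

lemma Hc_Suc: "t < length ss \<Longrightarrow> Hc c ss (Suc t) = Hc c ss t + bexp (ss ! t)"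
  by (simp add: Hc_def take_Suc_conv_app_nth)

lemma bexp_bound: "\<bar>bexp s\<bar> \<le> 1"
  by (cases s) auto

lemma bexp_m1: "bexp s = -1 \<Longrightarrow> s = Binv"
  by (cases s) auto

lemma bexp_p1: "bexp s = 1 \<Longrightarrow> s = B"
  by (cases s) auto

lemma same_dir:
  assumes "cross c ss h i" "cross c ss h j" "i < j" "ss ! i = ss ! j"
  shows "\<exists>m. i < m \<and> m < j \<and> cross c ss h m \<and> ss ! m \<noteq> ss ! i"
proof -
  let ?f = "Hc c ss"
  have jl: "j < length ss" using assms(2) cross_def by blast
  have lip: "\<forall>t. Suc i \<le> t \<and> t < j \<longrightarrow> \<bar>?f (Suc t) - ?f t\<bar> \<le> 1"
    using jl Hc_Suc bexp_bound by auto
  have il: "i < length ss" using jl assms(3) by simp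
  consider "ss ! i = B" "?f i = h - 1" "?f j = h - 1" | "ss ! i = Binv" "?f i = h" "?f j = h"
    using assms unfolding cross_def by auto
  then show ?thesis
  proof cases
    case 1
    have "?f (Suc i) = h" using 1 Hc_Suc[OF il] by simp
    then obtain t where t: "Suc i \<le> t" "t < j" "?f t = h" "?f (Suc t) = h - 1"
      using ivt_down[of "Suc i" j h ?f] lip 1 assms(3) by auto
    have "bexp (ss ! t) = -1" using Hc_Suc[of t ss c] t jl by simp
    then have "ss ! t = Binv" by (rule bexp_m1)
    then show ?thesis using t 1 jl unfolding cross_def by (intro exI[of _ t]) auto
  next
    case 2
    have "?f (Suc i) = h - 1" using 2 Hc_Suc[OF il] by simp
    then obtain t where t: "Suc i \<le> t" "t < j" "?f t = h - 1" "?f (Suc t) = h"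
      using ivt_up[of "Suc i" j ?f h] lip 2 assms(3) by auto
    have "bexp (ss ! t) = 1" using Hc_Suc[of t ss c] t jl by simp
    then have "ss ! t = B" by (rule bexp_p1)
    then show ?thesis using t 2 jl unfolding cross_def by (intro exI[of _ t]) auto
  qed
qed

lemma cross_letter: "cross c ss h i \<Longrightarrow> ss ! i = B \<or> ss ! i = Binv"
  unfolding cross_def by auto

lemma alternating:
  assumes "cross c ss h i" "cross c ss h j" "cross c ss h k" "i < j" "j < k"
  shows "\<exists>i j k. i < j \<and> j < k \<and> cross c ss h i \<and> cross c ss h j \<and> cross c ss h k
     \<and> ss ! j \<noteq> ss ! i \<and> ss ! k = ss ! i"
proof (cases "ss ! i = ss ! j")
  case True
  then obtain m where "i < m" "m < j" "cross c ss h m" "ss ! m \<noteq> ss ! i"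
    using same_dir assms by blast
  then show ?thesis using assms True by metis
next
  case False
  show ?thesis
  proof (cases "ss ! j = ss ! k")
    case True
    then obtain m where "j < m" "m < k" "cross c ss h m" "ss ! m \<noteq> ss ! j"
      using same_dir assms by blast
    then show ?thesis using assms True by metis
  next
    case F2: False
    have "ss ! k = ss ! i" using False F2 cross_letter[OF assms(1)] cross_letter[OF assms(2)]
        cross_letter[OF assms(3)] by auto
    then show ?thesis using assms False by metis
  qed
qed

lemma take_split: "a \<le> b \<Longrightarrow> take b xs = take a xs @ drop a (take b xs)"
  by (metis append_take_drop_id min.absorb1 take_take)

lemma shorten:
  assumes "i < j" "j < k" "cross c ss h i" "cross c ss h j" "cross c ss h k"
    "ss ! j \<noteq> ss ! i" "ss ! k = ss ! i"
  shows "\<exists>ss'. length ss' + 2 = length ss \<and> prodw ss' = prodw ss"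
proof -
  let ?f = "Hc c ss"
  define x where "x = ss ! i"
  have kl: "k < length ss" using assms(5) cross_def by blast
  have jl: "j < length ss" "i < length ss" using kl assms(1,2) by auto
  have xj: "ss ! j = ginv x" using cross_letter[OF assms(3)] cross_letter[OF assms(4)] assms(6)
    unfolding x_def by auto
  define w1 where "w1 = drop (Suc i) (take j ss)"
  define w2 where "w2 = drop (Suc j) (take k ss)"
  define r where "r = drop (Suc k) ss"
  define P where "P t = prodw (take t ss)" for t
  have tj: "take j ss = take (Suc i) ss @ w1" using take_split[of "Suc i" j ss] assms(1) w1_def by simp
  have tk: "take k ss = take (Suc j) ss @ w2" using take_split[of "Suc j" k ss] assms(2) w2_def by simp
  have Pj: "P j = P (Suc i) \<cdot> prodw w1" using tj P_def by (simp add: prodw_append)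
  have Pk: "P k = P (Suc j) \<cdot> prodw w2" using tk P_def by (simp add: prodw_append)
  have Pi: "P (Suc i) = P i \<cdot> gen x" using jl P_def x_def by (simp add: take_Suc_conv_app_nth)
  have Pj': "P (Suc j) = P j \<cdot> gen (ginv x)" using jl P_def xj by (simp add: take_Suc_conv_app_nth)
  have Pk': "P (Suc k) = P k \<cdot> gen x" using kl P_def x_def assms(7) by (simp add: take_Suc_conv_app_nth)
  have fP: "?f t = c + height (P t)" for t by (simp add: Hc_def P_def)
  have h1: "height (prodw w1) = 0"
  proof -
    have "?f j = ?f (Suc i)"
      using assms(3,4) xj Hc_Suc[OF jl(2), of c] unfolding cross_def x_def by auto
    then show ?thesis using Pj fP by simp
  qed
  have h2: "height (prodw w2) = 0"
  proof -
    have "?f k = ?f (Suc j)"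
      using assms(4,5,7) xj Hc_Suc[OF jl(1), of c] unfolding cross_def x_def by auto
    then show ?thesis using Pk fP by simp
  qed
  define ss' where "ss' = take i ss @ w2 @ [x] @ w1 @ r"
  have "prodw ss = P (Suc k) \<cdot> prodw r"
    unfolding P_def r_def by (metis append_take_drop_id prodw_append)
  also have "\<dots> = P i \<cdot> (gen x \<cdot> prodw w1 \<cdot> gen (ginv x) \<cdot> prodw w2 \<cdot> gen x) \<cdot> prodw r"
    by (simp add: Pk' Pk Pj' Pj Pi)
  also have "\<dots> = P i \<cdot> (prodw w2 \<cdot> gen x \<cdot> prodw w1) \<cdot> prodw r"
    by (simp only: key_swap[OF h1 h2])
  also have "\<dots> = prodw ss'"
    by (simp add: ss'_def P_def prodw_append)
  finally have e: "prodw ss' = prodw ss" by simp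
  have "length ss' + 2 = length ss"
    using kl assms(1,2) by (simp add: ss'_def w1_def w2_def r_def)
  then show ?thesis using e by blast
qed

lemma sort3:
  fixes a b d :: nat
  assumes "P a" "P b" "P d" "a \<noteq> b" "a \<noteq> d" "b \<noteq> d"
  shows "\<exists>i j k. i < j \<and> j < k \<and> P i \<and> P j \<and> P k"
proof -
  have "a < b \<or> b < a" "a < d \<or> d < a" "b < d \<or> d < b" using assms by auto
  then show ?thesis using assms by metis
qed

lemma edge_step: "{p, q} \<in> cayley_edges \<Longrightarrow> \<exists>s. q = p \<cdot> gen s"
proof -
  assume "{p, q} \<in> cayley_edges"
  then obtain g s where e: "{p, q} = {g, rmul g s}" unfolding cayley_edges_def by blast
  then consider "p = g" "q = g \<cdot> gen s" | "p = g \<cdot> gen s" "q = g"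
    by (auto simp: doubleton_eq_iff rmul_gmul)
  then show ?thesis
  proof cases
    case 1 then show ?thesis by blast
  next
    case 2
    then have "q = p \<cdot> gen (ginv s)" by simp
    then show ?thesis by blast
  qed
qed

lemma path_of_word:
  "is_path (map (\<lambda>t. g \<cdot> prodw (take t w)) [0..<Suc (length w)])"
  unfolding is_path_def
proof (intro conjI allI impI)
  show "map (\<lambda>t. g \<cdot> prodw (take t w)) [0..<Suc (length w)] \<noteq> []" by simp
next
  fix i assume i: "Suc i < length (map (\<lambda>t. g \<cdot> prodw (take t w)) [0..<Suc (length w)])"
  then have il: "i < length w" by simp
  let ?x = "g \<cdot> prodw (take i w)"
  have "map (\<lambda>t. g \<cdot> prodw (take t w)) [0..<Suc (length w)] ! i = ?x"
    using il by (simp del: upt_Suc)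
  moreover have "map (\<lambda>t. g \<cdot> prodw (take t w)) [0..<Suc (length w)] ! Suc i = rmul ?x (w ! i)"
    using il by (simp add: take_Suc_conv_app_nth rmul_gmul del: upt_Suc)
  ultimately show "{map (\<lambda>t. g \<cdot> prodw (take t w)) [0..<Suc (length w)] ! i,
       map (\<lambda>t. g \<cdot> prodw (take t w)) [0..<Suc (length w)] ! Suc i} \<in> cayley_edges"
    unfolding cayley_edges_def by auto
qed

theorem lemma1:
  assumes "geodesic \<sigma>"
  shows "\<not> (\<exists>e1 e2 e3. e1 \<in> path_edges \<sigma> \<and> e2 \<in> path_edges \<sigma> \<and> e3 \<in> path_edges \<sigma>
            \<and> b_edge e1 \<and> b_edge e2 \<and> b_edge e3
            \<and> e1 \<noteq> e2 \<and> e1 \<noteq> e3 \<and> e2 \<noteq> e3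
            \<and> edge_height e1 = edge_height e2 \<and> edge_height e2 = edge_height e3)"
proof
  assume "\<exists>e1 e2 e3. e1 \<in> path_edges \<sigma> \<and> e2 \<in> path_edges \<sigma> \<and> e3 \<in> path_edges \<sigma>
            \<and> b_edge e1 \<and> b_edge e2 \<and> b_edge e3
            \<and> e1 \<noteq> e2 \<and> e1 \<noteq> e3 \<and> e2 \<noteq> e3
            \<and> edge_height e1 = edge_height e2 \<and> edge_height e2 = edge_height e3"
  then obtain e1 e2 e3 where E: "e1 \<in> path_edges \<sigma>" "e2 \<in> path_edges \<sigma>" "e3 \<in> path_edges \<sigma>"
    "b_edge e1" "b_edge e2" "b_edge e3" "e1 \<noteq> e2" "e1 \<noteq> e3" "e2 \<noteq> e3"
    "edge_height e1 = edge_height e2" "edge_height e2 = edge_height e3" by blast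
  have path: "is_path \<sigma>" using assms geodesic_def by blast
  define n where "n = length \<sigma>"
  have ne: "\<sigma> \<noteq> []" using path is_path_def by blast
  have ex: "\<exists>s. \<sigma> ! Suc i = \<sigma> ! i \<cdot> gen s" if "Suc i < n" for i
    using path that edge_step unfolding is_path_def n_def by blast
  define ss where "ss = map (\<lambda>i. SOME s. \<sigma> ! Suc i = \<sigma> ! i \<cdot> gen s) [0..<n - 1]"
  have lss: "length ss = n - 1" by (simp add: ss_def)
  have step: "\<sigma> ! Suc i = \<sigma> ! i \<cdot> gen (ss ! i)" if "Suc i < n" for i
  proof -
    have "ss ! i = (SOME s. \<sigma> ! Suc i = \<sigma> ! i \<cdot> gen s)" using that by (simp add: ss_def)
    then show ?thesis using someI_ex[OF ex[OF that]] by simp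
  qed
  define g0 where "g0 = \<sigma> ! 0"
  have vert: "\<sigma> ! t = g0 \<cdot> prodw (take t ss)" if "t < n" for t
    using that
  proof (induction t)
    case 0 then show ?case by (simp add: g0_def)
  next
    case (Suc t)
    then have "t < length ss" using lss by simp
    then show ?case using Suc step[OF Suc.prems] by (simp add: take_Suc_conv_app_nth)
  qed
  define c where "c = height g0"
  have Hh: "Hc c ss t = height (\<sigma> ! t)" if "t < n" for t
    using vert[OF that] by (simp add: Hc_def c_def)
  have crossE: "\<exists>i. Suc i < n \<and> e = {\<sigma> ! i, \<sigma> ! Suc i} \<and> cross c ss (edge_height e) i"
    if he: "e \<in> path_edges \<sigma>" and hb: "b_edge e" for e
  proof -
    obtain i where i: "e = {\<sigma> ! i, \<sigma> ! Suc i}" "Suc i < n"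
      using he unfolding path_edges_def n_def by blast
    obtain g where g: "e = {g, rmul g B}" using hb b_edge_def by blast
    have eh: "edge_height e = height g + 1"
      using g by (simp add: edge_height_def rmul_gmul)
    have hs: "height (\<sigma> ! Suc i) = height (\<sigma> ! i) + bexp (ss ! i)"
      using step[OF i(2)] by simp
    have il: "i < length ss" using i(2) lss by simp
    consider "\<sigma> ! i = g" "\<sigma> ! Suc i = g \<cdot> gen B" | "\<sigma> ! i = g \<cdot> gen B" "\<sigma> ! Suc i = g"
      using i(1) g by (auto simp: doubleton_eq_iff rmul_gmul)
    then have "cross c ss (edge_height e) i"
    proof cases
      case 1
      then have "bexp (ss ! i) = 1" using hs by simp
      then have "ss ! i = B" by (rule bexp_p1)
      then show ?thesis using 1 il Hh[of i] i(2) eh unfolding cross_def by auto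
    next
      case 2
      then have "bexp (ss ! i) = -1" using hs by simp
      then have "ss ! i = Binv" by (rule bexp_m1)
      then show ?thesis using 2 il Hh[of i] i(2) eh unfolding cross_def by auto
    qed
    then show ?thesis using i by blast
  qed
  define h where "h = edge_height e1"
  obtain i1 where i1: "e1 = {\<sigma> ! i1, \<sigma> ! Suc i1}" "cross c ss h i1"
    using crossE[OF E(1,4)] h_def by blast
  obtain i2 where i2: "e2 = {\<sigma> ! i2, \<sigma> ! Suc i2}" "cross c ss h i2"
    using crossE[OF E(2,5)] h_def E(10) by auto
  obtain i3 where i3: "e3 = {\<sigma> ! i3, \<sigma> ! Suc i3}" "cross c ss h i3"
    using crossE[OF E(3,6)] h_def E(10,11) by auto
  have "i1 \<noteq> i2" "i1 \<noteq> i3" "i2 \<noteq> i3" using i1 i2 i3 E(7,8,9) by auto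
  then obtain i j k where ijk: "i < j" "j < k" "cross c ss h i" "cross c ss h j" "cross c ss h k"
    using sort3[of "cross c ss h"] i1 i2 i3 by blast
  obtain i' j' k' where alt: "i' < j'" "j' < k'" "cross c ss h i'" "cross c ss h j'" "cross c ss h k'"
     "ss ! j' \<noteq> ss ! i'" "ss ! k' = ss ! i'"
    using alternating[OF ijk(3,4,5,1,2)] by blast
  obtain ss' where ss': "length ss' + 2 = length ss" "prodw ss' = prodw ss"
    using shorten[OF alt] by blast
  define \<tau> where "\<tau> = map (\<lambda>t. g0 \<cdot> prodw (take t ss')) [0..<Suc (length ss')]"
  have tp: "is_path \<tau>" unfolding \<tau>_def by (rule path_of_word)
  have "hd \<tau> = g0" unfolding \<tau>_def by (simp add: hd_map del: upt_Suc)
  then have hd: "hd \<tau> = hd \<sigma>" using ne by (simp add: g0_def hd_conv_nth)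
  have "last \<tau> = g0 \<cdot> prodw ss'" unfolding \<tau>_def by (simp add: last_map del: upt_Suc)
  also have "\<dots> = g0 \<cdot> prodw (take (n - 1) ss)" using ss' lss by simp
  also have "\<dots> = \<sigma> ! (n - 1)" using vert[of "n - 1"] ne n_def by simp
  also have "\<dots> = last \<sigma>" using ne n_def by (simp add: last_conv_nth)
  finally have la: "last \<tau> = last \<sigma>" .
  have "n \<le> length \<tau>" using assms tp hd la unfolding geodesic_def n_def by blast
  moreover have "length \<tau> = Suc (length ss')" by (simp add: \<tau>_def)
  ultimately show False using ss'(1) lss by simp
qed

end
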